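(* Let $\mathcal H$ be a separable complex Hilbert space, $A\in L(\mathcal H)^+$ and $\mathcal S$ a closed subspace of $\mathcal H$. The pair $(A,\mathcal S)$ is compatible if and only if there exists an $A$-projection into $\mathcal S$.
   Context: $(A,\mathcal S)$ is compatible if there exists $Q\in L(\mathcal H)$ with $Q^2=Q$, $R(Q)=\mathcal S$ and $AQ=Q^*A$. With $\|z\|_A=\langle Az,z\rangle^{1/2}$, an $A$-projection into $\mathcal S$ is an operator $T\in L(\mathcal H)$ with $R(T)\subseteq\mathcal S$ and $\|y-Ty\|_A\le\|y-s\|_A$ for all $y\in\mathcal H$, $s\in\mathcal S$. *)

theory Defs
  imports "HOL-Analysis.Analysis"
begin

text \<open>HOL-Analysis has no complex vector spaces / complex inner product spaces,
so we introduce them here as type classes (convention: the inner product is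
conjugate-linear in the first argument and linear in the second).\<close>

class complex_vector = real_vector +
  fixes scaleC :: "complex \<Rightarrow> 'a \<Rightarrow> 'a" (infixr "*\<^sub>C" 75)
  assumes scaleC_add_right: "a *\<^sub>C (x + y) = a *\<^sub>C x + a *\<^sub>C y"
    and scaleC_add_left: "(a + b) *\<^sub>C x = a *\<^sub>C x + b *\<^sub>C x"
    and scaleC_scaleC: "a *\<^sub>C (b *\<^sub>C x) = (a * b) *\<^sub>C x"
    and scaleC_one: "1 *\<^sub>C x = x"
    and scaleR_scaleC: "scaleR r x = complex_of_real r *\<^sub>C x"

class complex_inner = complex_vector + real_normed_vector +
  fixes cinner :: "'a \<Rightarrow> 'a \<Rightarrow> complex"
  assumes cinner_commute: "cinner x y = cnj (cinner y x)"
    and cinner_add_left: "cinner (x + y) z = cinner x z + cinner y z"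
    and cinner_scaleC_left: "cinner (c *\<^sub>C x) y = cnj c * cinner x y"
    and cinner_self_real: "Im (cinner x x) = 0"
    and cinner_self_nonneg: "0 \<le> Re (cinner x x)"
    and cinner_self_eq_zero: "cinner x x = 0 \<longleftrightarrow> x = 0"
    and norm_eq_sqrt_cinner: "norm x = sqrt (Re (cinner x x))"

text \<open>A complex Hilbert space is a type of class complex_inner + complete_space.\<close>

definition clinear :: "('a::complex_vector \<Rightarrow> 'b::complex_vector) \<Rightarrow> bool" where
  "clinear T \<longleftrightarrow> (\<forall>x y. T (x + y) = T x + T y) \<and> (\<forall>c x. T (c *\<^sub>C x) = c *\<^sub>C T x)"

definition bounded_clinear :: "('a::complex_inner \<Rightarrow> 'b::complex_inner) \<Rightarrow> bool" where
  "bounded_clinear T \<longleftrightarrow> clinear T \<and> (\<exists>K. \<forall>x. norm (T x) \<le> norm x * K)"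

definition cadjoint :: "('a::complex_inner \<Rightarrow> 'a) \<Rightarrow> ('a \<Rightarrow> 'a)" where
  "cadjoint T = (SOME T'. \<forall>x y. cinner (T x) y = cinner x (T' y))"

definition positive_op :: "('a::complex_inner \<Rightarrow> 'a) \<Rightarrow> bool" where
  "positive_op A \<longleftrightarrow> bounded_clinear A \<and>
     (\<forall>x. Im (cinner (A x) x) = 0 \<and> 0 \<le> Re (cinner (A x) x))"

definition csubspace :: "'a::complex_vector set \<Rightarrow> bool" where
  "csubspace S \<longleftrightarrow> 0 \<in> S \<and> (\<forall>x\<in>S. \<forall>y\<in>S. x + y \<in> S) \<and> (\<forall>c. \<forall>x\<in>S. c *\<^sub>C x \<in> S)"

definition closed_csubspace :: "'a::complex_inner set \<Rightarrow> bool" where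
  "closed_csubspace S \<longleftrightarrow> csubspace S \<and> closed S"

definition A_norm :: "('a::complex_inner \<Rightarrow> 'a) \<Rightarrow> 'a \<Rightarrow> real" where
  "A_norm A z = sqrt (Re (cinner (A z) z))"

definition compatible :: "('a::complex_inner \<Rightarrow> 'a) \<Rightarrow> 'a set \<Rightarrow> bool" where
  "compatible A S \<longleftrightarrow> (\<exists>Q. bounded_clinear Q \<and> Q \<circ> Q = Q \<and> range Q = S \<and>
                                A \<circ> Q = cadjoint Q \<circ> A)"

definition A_projection :: "('a::complex_inner \<Rightarrow> 'a) \<Rightarrow> 'a set \<Rightarrow> ('a \<Rightarrow> 'a) \<Rightarrow> bool" where
  "A_projection A S T \<longleftrightarrow> bounded_clinear T \<and> range T \<subseteq> S \<and>
     (\<forall>y. \<forall>s\<in>S. A_norm A (y - T y) \<le> A_norm A (y - s))"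

end

theory Submission
  imports Defs
begin

lemma cinner_zero_left[simp]: "cinner 0 (y::'a::complex_inner) = 0"
  using cinner_add_left[of 0 0 y] by simp

lemma cinner_add_right: "cinner (x::'a::complex_inner) (y + z) = cinner x y + cinner x z"
  using cinner_commute[of x "y+z"] cinner_commute[of y x] cinner_commute[of z x] by (simp add: cinner_add_left)

lemma cinner_zero_right[simp]: "cinner (x::'a::complex_inner) 0 = 0"
  using cinner_commute[of x 0] by simp

lemma cinner_scaleC_right: "cinner (x::'a::complex_inner) (c *\<^sub>C y) = c * cinner x y"
  using cinner_commute[of x "c *\<^sub>C y"] cinner_commute[of y x] by (simp add: cinner_scaleC_left)

lemma uminus_scaleC: "- (x::'a::complex_vector) = (-1) *\<^sub>C x"
proof -
  have "- x = (-1::real) *\<^sub>R x" by simp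
  also have "\<dots> = complex_of_real (-1) *\<^sub>C x" by (rule scaleR_scaleC)
  finally show ?thesis by simp
qed

lemma cinner_minus_left: "cinner (- x) (y::'a::complex_inner) = - cinner x y"
  by (simp only: uminus_scaleC[of x] cinner_scaleC_left) simp

lemma cinner_minus_right: "cinner x (- y::'a::complex_inner) = - cinner x y"
  by (simp only: uminus_scaleC[of y] cinner_scaleC_right) simp

lemma cinner_diff_left: "cinner (x - y) (z::'a::complex_inner) = cinner x z - cinner y z"
  by (simp only: diff_conv_add_uminus cinner_add_left cinner_minus_left)

lemma cinner_diff_right: "cinner x (y - z::'a::complex_inner) = cinner x y - cinner x z"
  by (simp only: diff_conv_add_uminus cinner_add_right cinner_minus_right)

lemma scaleC_diff_right: "c *\<^sub>C (x - y::'a::complex_vector) = c *\<^sub>C x - c *\<^sub>C y"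
proof -
  have "c *\<^sub>C (x - y) = c *\<^sub>C x + c *\<^sub>C ((-1) *\<^sub>C y)"
    by (simp only: diff_conv_add_uminus scaleC_add_right uminus_scaleC[of y])
  also have "c *\<^sub>C ((-1) *\<^sub>C y) = (-1) *\<^sub>C (c *\<^sub>C y)"
    by (simp only: scaleC_scaleC mult.commute)
  finally show ?thesis by (simp only: diff_conv_add_uminus uminus_scaleC[of "c *\<^sub>C y"])
qed

lemma scaleC_zero_right[simp]: "c *\<^sub>C (0::'a::complex_vector) = 0"
  using scaleC_add_right[of c 0 0] by simp

lemma scaleC_zero_left[simp]: "0 *\<^sub>C (x::'a::complex_vector) = 0"
  using scaleR_scaleC[of 0 x] by simp

lemma cinner_self: "cinner x (x::'a::complex_inner) = complex_of_real ((norm x)\<^sup>2)"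
proof -
  have "(norm x)\<^sup>2 = Re (cinner x x)" using norm_eq_sqrt_cinner[of x] cinner_self_nonneg[of x]
    by (metis real_sqrt_pow2)
  then show ?thesis using cinner_self_real[of x]
    by (intro complex_eqI) (simp_all only: Re_complex_of_real Im_complex_of_real)
qed

lemma norm_sq_Re: "(norm x)\<^sup>2 = Re (cinner x (x::'a::complex_inner))"
  by (simp only: cinner_self Re_complex_of_real)

lemma norm_add_sq: "(norm (x + y))\<^sup>2 = (norm x)\<^sup>2 + (norm (y::'a::complex_inner))\<^sup>2 + 2 * Re (cinner x y)"
proof -
  have 1: "cinner (x+y) (x+y) = cinner x x + cinner y y + cinner x y + cinner y x"
    by (simp add: cinner_add_left cinner_add_right)
  have 2: "Re (cinner y x) = Re (cinner x y)" using cinner_commute[of y x] by simp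
  show ?thesis unfolding norm_sq_Re 1 using 2 by simp
qed

lemma norm_diff_sq: "(norm (x - y))\<^sup>2 = (norm x)\<^sup>2 + (norm (y::'a::complex_inner))\<^sup>2 - 2 * Re (cinner x y)"
  using norm_add_sq[of x "-y"] by (simp add: cinner_minus_right)

lemma norm_scaleC: "norm (c *\<^sub>C (x::'a::complex_inner)) = cmod c * norm x"
proof -
  have "cinner (c *\<^sub>C x) (c *\<^sub>C x) = (cnj c * c) * cinner x x"
    by (simp add: cinner_scaleC_left cinner_scaleC_right)
  also have "cnj c * c = complex_of_real ((cmod c)\<^sup>2)" using complex_norm_square[of c] by (simp add: mult.commute)
  finally have "cinner (c *\<^sub>C x) (c *\<^sub>C x) = complex_of_real ((cmod c)\<^sup>2 * (norm x)\<^sup>2)"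
    by (simp add: cinner_self)
  then have "(norm (c *\<^sub>C x))\<^sup>2 = ((cmod c) * norm x)\<^sup>2"
    by (simp add: norm_sq_Re power_mult_distrib)
  then show ?thesis by (simp add: power2_eq_iff_nonneg)
qed

lemma cinner_eq_zero_iff: "cinner x x = 0 \<longleftrightarrow> (x::'a::complex_inner) = 0"
  by (rule cinner_self_eq_zero)

lemma cauchy_schwarz: "cmod (cinner x y) \<le> norm x * norm (y::'a::complex_inner)"
proof (cases "y = 0")
  case True then show ?thesis by simp
next
  case False
  define a where "a = cinner x y"
  define n where "n = (norm y)\<^sup>2"
  have n: "n > 0" using False by (simp add: n_def)
  define c where "c = cnj a / complex_of_real n"
  have "0 \<le> (norm (x - c *\<^sub>C y))\<^sup>2" by simp
  also have "\<dots> = (norm x)\<^sup>2 + (cmod c)\<^sup>2 * n - 2 * Re (c * a)"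
    by (simp add: norm_diff_sq norm_scaleC cinner_scaleC_right power_mult_distrib a_def n_def)
  also have "c * a = complex_of_real ((cmod a)\<^sup>2 / n)"
    using n by (simp add: c_def complex_norm_square[symmetric] mult.commute)
  also have "(cmod c)\<^sup>2 * n = (cmod a)\<^sup>2 / n"
    using n by (simp add: c_def norm_divide power2_eq_square)
  finally have "(cmod a)\<^sup>2 / n \<le> (norm x)\<^sup>2" by simp
  then have "(cmod a)\<^sup>2 \<le> (norm x)\<^sup>2 * n" using n by (simp add: divide_le_eq)
  then have "(cmod a)\<^sup>2 \<le> (norm x * norm y)\<^sup>2" by (simp add: n_def power_mult_distrib)
  then show ?thesis unfolding a_def
    by (meson mult_nonneg_nonneg norm_ge_zero power2_le_imp_le)
qed


lemma scaleC_minus_left: "(- c) *\<^sub>C (x::'a::complex_vector) = - (c *\<^sub>C x)"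
proof -
  have "- (c *\<^sub>C x) = (-1) *\<^sub>C (c *\<^sub>C x)" by (rule uminus_scaleC)
  also have "\<dots> = (- c) *\<^sub>C x" by (simp only: scaleC_scaleC) simp
  finally show ?thesis by simp
qed

lemma diff_scaleC: "u - c *\<^sub>C (s::'a::complex_vector) = u + (- c) *\<^sub>C s"
  by (simp only: scaleC_minus_left) simp

lemma form_orth:
  fixes F :: "'a::complex_vector \<Rightarrow> 'a \<Rightarrow> complex"
  assumes sym: "\<And>x y. F x y = cnj (F y x)"
   and add2: "\<And>x y z. F x (y + z) = F x y + F x z"
   and sc2: "\<And>x c y. F x (c *\<^sub>C y) = c * F x y"
   and pos: "\<And>x. 0 \<le> Re (F x x)"
   and mn: "\<And>c. Re (F u u) \<le> Re (F (u - c *\<^sub>C s) (u - c *\<^sub>C s))"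
  shows "F u s = 0"
proof -
  have add1: "F (x + y) z = F x z + F y z" for x y z
    using sym[of "x+y" z] sym[of z x] sym[of z y] add2[of z x y] by simp
  have sc1: "F (c *\<^sub>C x) y = cnj c * F x y" for c x y
    using sym[of "c *\<^sub>C x" y] sym[of y x] sc2[of y c x] by simp
  define a where "a = F u s"
  define b where "b = Re (F s s)"
  define k where "k = (cmod a)\<^sup>2"
  define t :: real where "t = 1 / (b + 1)"
  have b0: "0 \<le> b" using pos by (simp add: b_def)
  have t0: "0 < t" using b0 by (simp add: t_def)
  have tb: "t * b < 1" using b0 by (simp add: t_def)
  define c where "c = complex_of_real t * cnj a"
  define d where "d = - c"
  have exp: "F (u + d *\<^sub>C s) (u + d *\<^sub>C s) = F u u + d * a + cnj d * cnj a + (cnj d * d) * F s s"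
    by (simp add: add1 add2 sc1 sc2 a_def sym[of s u] algebra_simps)
  have ak: "a * cnj a = complex_of_real k" using complex_norm_square[of a] by (simp add: k_def)
  have da: "d * a = - complex_of_real (t * k)" by (simp add: d_def c_def ak[symmetric] mult.commute mult.left_commute)
  have dd: "cnj d * d = complex_of_real (t\<^sup>2 * k)"
    by (simp add: d_def c_def ak[symmetric] power2_eq_square mult.commute mult.left_commute)
  have cda: "cnj d * cnj a = cnj (d * a)" by simp
  have "Re (F u u) \<le> Re (F (u + d *\<^sub>C s) (u + d *\<^sub>C s))"
    using mn[of c] by (simp only: diff_scaleC d_def)
  also have "\<dots> = Re (F u u) - 2 * t * k + t\<^sup>2 * k * b"
    unfolding exp cda da dd by (simp add: b_def)
  finally have "0 \<le> k * (t * (t * b - 2))" by (simp add: algebra_simps power2_eq_square)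
  moreover have "t * (t * b - 2) < 0" using t0 tb by (simp add: mult_pos_neg)
  moreover have "0 \<le> k" by (simp add: k_def)
  ultimately have "k = 0" by (smt (verit) mult_pos_neg)
  then show ?thesis by (simp add: k_def a_def)
qed

lemma cinner_lipschitz: "(norm a)-lipschitz_on UNIV (\<lambda>x. cinner (a::'a::complex_inner) x)"
proof (rule lipschitz_onI)
  fix x y :: 'a
  have "dist (cinner a x) (cinner a y) = cmod (cinner a (x - y))"
    by (simp add: dist_norm cinner_diff_right)
  also have "\<dots> \<le> norm a * norm (x - y)" by (rule cauchy_schwarz)
  finally show "dist (cinner a x) (cinner a y) \<le> norm a * dist x y" by (simp add: dist_norm)
qed simp

lemma cinner_cont: "continuous_on UNIV (\<lambda>x. cinner (a::'a::complex_inner) x)"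
  by (rule lipschitz_on_continuous_on[OF cinner_lipschitz])

lemma closed_orth: "closed {x. cinner (a::'a::complex_inner) x = 0}"
  by (rule closed_Collect_eq[OF cinner_cont continuous_on_const])

lemma csub_add: "csubspace S \<Longrightarrow> x \<in> S \<Longrightarrow> y \<in> S \<Longrightarrow> x + y \<in> S"
  by (simp add: csubspace_def)
lemma csub_scaleC: "csubspace S \<Longrightarrow> x \<in> S \<Longrightarrow> c *\<^sub>C x \<in> S"
  by (simp add: csubspace_def)
lemma csub_zero: "csubspace S \<Longrightarrow> 0 \<in> S"
  by (simp add: csubspace_def)
lemma csub_minus: "csubspace S \<Longrightarrow> x \<in> S \<Longrightarrow> - x \<in> S"
  by (metis csub_scaleC uminus_scaleC)
lemma csub_diff: "csubspace S \<Longrightarrow> x \<in> S \<Longrightarrow> y \<in> S \<Longrightarrow> x - y \<in> S"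
  by (metis csub_add csub_minus diff_conv_add_uminus)
lemma csub_scaleR: "csubspace S \<Longrightarrow> x \<in> S \<Longrightarrow> r *\<^sub>R x \<in> S"
  by (metis csub_scaleC scaleR_scaleC)


lemma parallelogram:
  "(norm (a - b))\<^sup>2 = 2 * (norm a)\<^sup>2 + 2 * (norm (b::'a::complex_inner))\<^sup>2 - (norm (a + b))\<^sup>2"
  using norm_add_sq[of a b] norm_diff_sq[of a b] by simp

lemma closest_exists:
  fixes N :: "'a::{complex_inner,complete_space} set"
  assumes cs: "csubspace N" and cl: "closed N"
  shows "\<exists>p\<in>N. \<forall>n\<in>N. norm (x - p) \<le> norm (x - n)"
proof -
  define d where "d = infdist x N"
  have Nne: "N \<noteq> {}" using csub_zero[OF cs] by auto
  have d0: "0 \<le> d" by (simp add: d_def infdist_nonneg)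
  have dle: "d \<le> norm (x - n)" if "n \<in> N" for n
    using infdist_le[OF that, of x] by (simp add: d_def dist_norm)
  have "\<exists>n\<in>N. norm (x - n) < d + inverse (real (Suc k))" for k
  proof -
    have "infdist x N < d + inverse (real (Suc k))" by (simp add: d_def)
    then have "(INF a\<in>N. dist x a) < d + inverse (real (Suc k))" using Nne by (simp add: infdist_notempty)
    then obtain n where "n \<in> N" "dist x n < d + inverse (real (Suc k))"
      using cInf_lessD[of "dist x ` N"] Nne by auto
    then show ?thesis by (auto simp: dist_norm)
  qed
  then obtain f where fN: "\<And>k. f k \<in> N" and fd: "\<And>k. norm (x - f k) < d + inverse (real (Suc k))"
    by metis
  define g where "g k = 2 * (d + inverse (real (Suc k)))\<^sup>2 - 2 * d\<^sup>2" for k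
  have g0: "g \<longlonglongrightarrow> 0"
  proof -
    have "g \<longlonglongrightarrow> 2 * (d + 0)\<^sup>2 - 2 * d\<^sup>2" unfolding g_def
      by (intro tendsto_intros LIMSEQ_inverse_real_of_nat)
    then show ?thesis by simp
  qed
  have key: "(norm (f j - f k))\<^sup>2 \<le> g j + g k" for j k
  proof -
    define m where "m = (1/2::real) *\<^sub>R (f j + f k)"
    have mN: "m \<in> N" unfolding m_def by (intro csub_scaleR csub_add cs fN)
    have eq1: "f j - f k = (x - f k) - (x - f j)" by simp
    have eq2: "(x - f k) + (x - f j) = 2 *\<^sub>R (x - m)"
      by (simp add: m_def scaleR_diff_right scaleR_add_right scaleR_2)
    have "(norm (f j - f k))\<^sup>2 = 2 * (norm (x - f k))\<^sup>2 + 2 * (norm (x - f j))\<^sup>2 - (norm (2 *\<^sub>R (x - m)))\<^sup>2"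
      unfolding eq1 parallelogram eq2 ..
    also have "(norm (2 *\<^sub>R (x - m)))\<^sup>2 = 4 * (norm (x - m))\<^sup>2" by (simp add: power2_eq_square)
    also have "4 * d\<^sup>2 \<le> 4 * (norm (x - m))\<^sup>2" using dle[OF mN] d0 by (simp add: power_mono)
    then have "2 * (norm (x - f k))\<^sup>2 + 2 * (norm (x - f j))\<^sup>2 - 4 * (norm (x - m))\<^sup>2
        \<le> 2 * (d + inverse (real (Suc k)))\<^sup>2 + 2 * (d + inverse (real (Suc j)))\<^sup>2 - 4 * d\<^sup>2"
    proof -
      have "(norm (x - f k))\<^sup>2 \<le> (d + inverse (real (Suc k)))\<^sup>2"
        using fd[of k] by (simp add: power_mono less_imp_le)
      moreover have "(norm (x - f j))\<^sup>2 \<le> (d + inverse (real (Suc j)))\<^sup>2"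
        using fd[of j] by (simp add: power_mono less_imp_le)
      ultimately show ?thesis using \<open>4 * d\<^sup>2 \<le> 4 * (norm (x - m))\<^sup>2\<close> by linarith
    qed
    finally show ?thesis by (simp add: g_def)
  qed
  have "Cauchy f"
  proof (rule metric_CauchyI)
    fix e :: real assume e: "0 < e"
    then have "e\<^sup>2 / 2 > 0" by simp
    with g0 obtain M where M: "\<And>n. n \<ge> M \<Longrightarrow> dist (g n) 0 < e\<^sup>2 / 2"
      by (metis LIMSEQ_def)
    have "dist (f m) (f n) < e" if "m \<ge> M" "n \<ge> M" for m n
    proof -
      have "(norm (f m - f n))\<^sup>2 < e\<^sup>2" using key[of m n] M[OF that(1)] M[OF that(2)] by (simp add: dist_norm)
      then have "norm (f m - f n) < e" using e by (simp add: power_less_imp_less_base)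
      then show ?thesis by (simp add: dist_norm)
    qed
    then show "\<exists>M. \<forall>m\<ge>M. \<forall>n\<ge>M. dist (f m) (f n) < e" by blast
  qed
  then obtain p where fp: "f \<longlonglongrightarrow> p" using Cauchy_convergent convergent_def by blast
  have pN: "p \<in> N" by (rule closed_sequentially[OF cl fN fp])
  have "norm (x - p) \<le> d + 0"
  proof (rule LIMSEQ_le)
    show "(\<lambda>k. norm (x - f k)) \<longlonglongrightarrow> norm (x - p)" by (intro tendsto_intros fp)
    show "(\<lambda>k. d + inverse (real (Suc k))) \<longlonglongrightarrow> d + 0" by (intro tendsto_intros LIMSEQ_inverse_real_of_nat)
    show "\<exists>N. \<forall>n\<ge>N. norm (x - f n) \<le> d + inverse (real (Suc n))" using fd less_imp_le by blast
  qed
  then show ?thesis using pN dle by force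
qed

lemma orth_exists:
  fixes N :: "'a::{complex_inner,complete_space} set"
  assumes cs: "csubspace N" and cl: "closed N"
  shows "\<exists>p\<in>N. \<forall>n\<in>N. cinner (x - p) n = 0"
proof -
  obtain p where pN: "p \<in> N" and pm: "\<And>n. n \<in> N \<Longrightarrow> norm (x - p) \<le> norm (x - n)"
    using closest_exists[OF cs cl] by blast
  have "cinner (x - p) n = 0" if nN: "n \<in> N" for n
  proof (rule form_orth[where F = cinner])
    show "\<And>x y. cinner x y = cnj (cinner y x)" by (rule cinner_commute)
    show "\<And>x y z. cinner x (y + z) = cinner x y + cinner x z" by (rule cinner_add_right)
    show "\<And>x c y. cinner x (c *\<^sub>C y) = c * cinner x y" by (rule cinner_scaleC_right)
    show "\<And>x. 0 \<le> Re (cinner x x)" by (rule cinner_self_nonneg)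
    fix c
    have "p + c *\<^sub>C n \<in> N" by (intro csub_add csub_scaleC cs pN nN)
    then have "norm (x - p) \<le> norm (x - (p + c *\<^sub>C n))" by (rule pm)
    also have "x - (p + c *\<^sub>C n) = (x - p) - c *\<^sub>C n" by simp
    finally have "(norm (x - p))\<^sup>2 \<le> (norm ((x - p) - c *\<^sub>C n))\<^sup>2" by (simp add: power_mono)
    then show "Re (cinner (x - p) (x - p)) \<le> Re (cinner (x - p - c *\<^sub>C n) (x - p - c *\<^sub>C n))"
      by (simp only: norm_sq_Re)
  qed
  then show ?thesis using pN by blast
qed

definition proj :: "'a::complex_inner set \<Rightarrow> 'a \<Rightarrow> 'a" where
  "proj N x = (SOME p. p \<in> N \<and> (\<forall>n\<in>N. cinner (x - p) n = 0))"

context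
  fixes N :: "'a::{complex_inner,complete_space} set"
  assumes cs: "csubspace N" and cl: "closed N"
begin

lemma proj_prop: "proj N x \<in> N \<and> (\<forall>n\<in>N. cinner (x - proj N x) n = 0)"
  unfolding proj_def by (rule someI_ex) (use orth_exists[OF cs cl] in blast)

lemma proj_in: "proj N x \<in> N" using proj_prop by blast
lemma proj_orth: "n \<in> N \<Longrightarrow> cinner (x - proj N x) n = 0" using proj_prop by blast

lemma proj_unique:
  assumes pN: "p \<in> N" and po: "\<And>n. n \<in> N \<Longrightarrow> cinner (x - p) n = 0"
  shows "proj N x = p"
proof -
  let ?q = "proj N x"
  have dN: "p - ?q \<in> N" by (intro csub_diff cs pN proj_in)
  have a: "cinner (x - ?q) (p - ?q) = 0" by (rule proj_orth[OF dN])
  have b: "cinner (x - p) (p - ?q) = 0" by (rule po[OF dN])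
  have "cinner ((x - ?q) - (x - p)) (p - ?q) = cinner (x - ?q) (p - ?q) - cinner (x - p) (p - ?q)"
    by (rule cinner_diff_left)
  then have "cinner ((x - ?q) - (x - p)) (p - ?q) = 0" by (simp only: a b) simp
  moreover have "(x - ?q) - (x - p) = p - ?q" by simp
  ultimately have "cinner (p - ?q) (p - ?q) = 0" by simp
  then show ?thesis by (simp add: cinner_eq_zero_iff)
qed

lemma proj_add: "proj N (x + y) = proj N x + proj N y"
proof (rule proj_unique)
  show "proj N x + proj N y \<in> N" by (intro csub_add cs proj_in)
  fix n assume n: "n \<in> N"
  have e: "x + y - (proj N x + proj N y) = (x - proj N x) + (y - proj N y)" by simp
  show "cinner (x + y - (proj N x + proj N y)) n = 0"
    unfolding e by (simp only: cinner_add_left proj_orth[OF n]) simp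
qed

lemma proj_scaleC: "proj N (c *\<^sub>C x) = c *\<^sub>C proj N x"
proof (rule proj_unique)
  show "c *\<^sub>C proj N x \<in> N" by (intro csub_scaleC cs proj_in)
  fix n assume n: "n \<in> N"
  show "cinner (c *\<^sub>C x - c *\<^sub>C proj N x) n = 0"
    by (simp only: scaleC_diff_right[symmetric] cinner_scaleC_left proj_orth[OF n]) simp
qed

lemma proj_id: "z \<in> N \<Longrightarrow> proj N z = z"
  by (rule proj_unique) simp_all

lemma proj_norm: "norm (proj N x) \<le> norm x"
proof -
  let ?p = "proj N x"
  have o: "cinner (x - ?p) ?p = 0" by (rule proj_orth[OF proj_in])
  have o2: "cinner ?p (x - ?p) = 0"
    by (subst cinner_commute) (simp only: o complex_cnj_zero)
  have e: "?p + (x - ?p) = x" by simp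
  have "(norm x)\<^sup>2 = (norm ?p)\<^sup>2 + (norm (x - ?p))\<^sup>2"
    using norm_add_sq[of ?p "x - ?p"] unfolding e o2 by simp
  then have "(norm ?p)\<^sup>2 \<le> (norm x)\<^sup>2" by simp
  then show ?thesis by (rule power2_le_imp_le) simp
qed

lemma proj_bounded: "bounded_clinear (proj N)"
  unfolding bounded_clinear_def clinear_def
proof (intro conjI allI exI)
  show "proj N (x + y) = proj N x + proj N y" for x y by (rule proj_add)
  show "proj N (c *\<^sub>C x) = c *\<^sub>C proj N x" for c x by (rule proj_scaleC)
  show "norm (proj N x) \<le> norm x * 1" for x using proj_norm[of x] by simp
qed

end


lemma riesz:
  fixes g :: "'a::{complex_inner,complete_space} \<Rightarrow> complex"
  assumes ga: "\<And>x y. g (x + y) = g x + g y"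
    and gs: "\<And>c x. g (c *\<^sub>C x) = c * g x"
    and gb: "\<And>x. cmod (g x) \<le> K * norm x"
  shows "\<exists>z. \<forall>x. g x = cinner z x"
proof (cases "\<forall>x. g x = 0")
  case True
  then show ?thesis by (intro exI[of _ 0]) simp
next
  case False
  then obtain x0 where gx0: "g x0 \<noteq> 0" by blast
  have g0: "g 0 = 0" using gs[of 0 0] by simp
  have gd: "g (x - y) = g x - g y" for x y
  proof -
    have "x - y = x + (-1) *\<^sub>C y" by (simp only: diff_conv_add_uminus uminus_scaleC[of y])
    then have "g (x - y) = g x + (-1) * g y" by (simp only: ga gs)
    then show ?thesis by simp
  qed
  have K0: "0 \<le> K"
  proof (rule ccontr)
    assume "\<not> 0 \<le> K"
    then have "K * norm x0 \<le> 0" by (simp add: mult_nonpos_nonneg)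
    moreover have "0 < cmod (g x0)" using gx0 by simp
    ultimately show False using gb[of x0] by linarith
  qed
  define Ker where "Ker = {x. g x = 0}"
  have cs: "csubspace Ker" unfolding csubspace_def Ker_def using ga gs g0 by simp
  have "K-lipschitz_on UNIV g"
  proof (rule lipschitz_onI)
    fix x y
    show "dist (g x) (g y) \<le> K * dist x y" using gb[of "x - y"] by (simp add: dist_norm gd)
  qed (rule K0)
  then have "continuous_on UNIV g" by (rule lipschitz_on_continuous_on)
  then have cl: "closed Ker" unfolding Ker_def by (rule closed_Collect_eq[OF _ continuous_on_const])
  define w where "w = x0 - proj Ker x0"
  have gw: "g w = g x0" using proj_in[OF cs cl, of x0] by (simp add: w_def gd Ker_def)
  have wo: "cinner w n = 0" if "n \<in> Ker" for n using proj_orth[OF cs cl that] by (simp add: w_def)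
  have w0: "w \<noteq> 0" using gw gx0 g0 by auto
  then have ww: "cinner w w \<noteq> 0" by (simp add: cinner_eq_zero_iff)
  define z where "z = cnj (g w / cinner w w) *\<^sub>C w"
  have "g x = cinner z x" for x
  proof -
    define v where "v = x - (g x / g w) *\<^sub>C w"
    have "g v = 0" using gx0 gw by (simp add: v_def gd gs)
    then have "cinner w v = 0" by (intro wo) (simp add: Ker_def)
    then have "cinner w x = (g x / g w) * cinner w w"
      by (simp add: v_def cinner_diff_right cinner_scaleC_right)
    then show ?thesis using ww gx0 gw
      by (simp add: z_def cinner_scaleC_left field_simps)
  qed
  then show ?thesis by blast
qed

lemma adjoint_exists:
  fixes T :: "'a::{complex_inner,complete_space} \<Rightarrow> 'a"
  assumes "bounded_clinear T"
  shows "\<exists>T'. \<forall>x y. cinner (T x) y = cinner x (T' y)"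
proof -
  from assms obtain K where add: "\<And>x y. T (x + y) = T x + T y" and sc: "\<And>c x. T (c *\<^sub>C x) = c *\<^sub>C T x"
    and bd: "\<And>x. norm (T x) \<le> norm x * K"
    unfolding bounded_clinear_def clinear_def by blast
  have "\<exists>z. \<forall>x. cinner (T x) y = cinner x z" for y
  proof -
    have "\<exists>z. \<forall>x. cinner y (T x) = cinner z x"
    proof (rule riesz)
      show "cinner y (T (x + x')) = cinner y (T x) + cinner y (T x')" for x x'
        by (simp add: add cinner_add_right)
      show "cinner y (T (c *\<^sub>C x)) = c * cinner y (T x)" for c x
        by (simp add: sc cinner_scaleC_right)
      show "cmod (cinner y (T x)) \<le> (norm y * K) * norm x" for x
      proof -
        have "cmod (cinner y (T x)) \<le> norm y * norm (T x)" by (rule cauchy_schwarz)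
        also have "\<dots> \<le> norm y * (norm x * K)" by (intro mult_left_mono bd) simp
        finally show ?thesis by (simp add: mult_ac)
      qed
    qed
    then obtain z where "\<And>x. cinner y (T x) = cinner z x" by blast
    then have "\<forall>x. cinner (T x) y = cinner x z"
      by (metis cinner_commute)
    then show ?thesis by blast
  qed
  then show ?thesis by metis
qed

lemma cadjoint_prop:
  fixes T :: "'a::{complex_inner,complete_space} \<Rightarrow> 'a"
  assumes "bounded_clinear T"
  shows "cinner (T x) y = cinner x (cadjoint T y)"
proof -
  have "\<forall>x y. cinner (T x) y = cinner x ((SOME T'. \<forall>x y. cinner (T x) y = cinner x (T' y)) y)"
    by (rule someI_ex[OF adjoint_exists[OF assms]])
  then have "\<forall>x y. cinner (T x) y = cinner x (cadjoint T y)" unfolding cadjoint_def .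
  then show ?thesis by blast
qed


lemma bcl_add: "bounded_clinear T \<Longrightarrow> T (x + y) = T x + T y"
  by (simp add: bounded_clinear_def clinear_def)
lemma bcl_scaleC: "bounded_clinear T \<Longrightarrow> T (c *\<^sub>C x) = c *\<^sub>C T x"
  by (simp add: bounded_clinear_def clinear_def)
lemma bcl_zero: "bounded_clinear T \<Longrightarrow> T 0 = 0"
  using bcl_add[of T 0 0] by simp
lemma bcl_diff: "bounded_clinear (T::'a::complex_inner \<Rightarrow> 'b::complex_inner) \<Longrightarrow> T (x - y) = T x - T y"
proof -
  assume b: "bounded_clinear T"
  have "T (x - y) = T (x + (-1) *\<^sub>C y)" by (simp only: diff_conv_add_uminus uminus_scaleC[of y])
  also have "\<dots> = T x + (-1) *\<^sub>C T y" by (simp only: bcl_add[OF b] bcl_scaleC[OF b])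
  finally show ?thesis by (simp only: uminus_scaleC[symmetric] diff_conv_add_uminus)
qed

lemma pos_herm:
  fixes A :: "'a::complex_inner \<Rightarrow> 'a"
  assumes "positive_op A"
  shows "cinner (A x) y = cinner x (A y)"
proof -
  have b: "bounded_clinear A" and r: "\<And>x. Im (cinner (A x) x) = 0"
    using assms by (auto simp: positive_op_def)
  define h where "h x y = cinner (A x) y - cinner x (A y)" for x y
  have hs: "h z z = 0" for z
  proof -
    have "cinner z (A z) = cnj (cinner (A z) z)" by (rule cinner_commute)
    also have "\<dots> = cinner (A z) z" using r[of z] by (intro complex_eqI) simp_all
    finally show ?thesis by (simp add: h_def)
  qed
  have e1: "h (x + y) (x + y) = h x x + h x y + h y x + h y y"
    by (simp add: h_def bcl_add[OF b] cinner_add_left cinner_add_right algebra_simps)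
  have e2: "h (x + \<i> *\<^sub>C y) (x + \<i> *\<^sub>C y) = h x x + \<i> * h x y - \<i> * h y x + h y y"
    by (simp add: h_def bcl_add[OF b] bcl_scaleC[OF b] cinner_add_left cinner_add_right
        cinner_scaleC_left cinner_scaleC_right algebra_simps)
  from e1 hs have a1: "h x y + h y x = 0" by simp
  from e2 hs have "\<i> * (h x y - h y x) = 0" by (simp add: algebra_simps)
  then have a2: "h x y - h y x = 0" by simp
  from a1 a2 have "h x y = 0" by (simp add: algebra_simps)
  then show ?thesis by (simp add: h_def)
qed


lemma compat_imp_proj:
  fixes A :: "'a::{complex_inner, complete_space} \<Rightarrow> 'a" and S :: "'a set"
  assumes pA: "positive_op A" and c: "compatible A S"
  shows "\<exists>T. A_projection A S T"
proof -
  obtain Q where bQ: "bounded_clinear Q" and QQ: "Q \<circ> Q = Q" and rQ: "range Q = S"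
    and AQ: "A \<circ> Q = cadjoint Q \<circ> A"
    using c unfolding compatible_def by blast
  have bA: "bounded_clinear A" and Apos: "\<And>x. 0 \<le> Re (cinner (A x) x)"
    using pA by (auto simp: positive_op_def)
  have QQx: "Q (Q x) = Q x" for x using QQ by (metis comp_apply)
  have adj: "A (Q z) = cadjoint Q (A z)" for z using AQ by (metis comp_apply)
  have "A_norm A (y - Q y) \<le> A_norm A (y - s)" if sS: "s \<in> S" for y s
  proof -
    obtain t where st: "s = Q t" using sS rQ by blast
    have Qs: "Q s = s" using st QQx by simp
    define u where "u = y - Q y"
    define v where "v = Q y - s"
    have ys: "y - s = u + v" by (simp add: u_def v_def)
    have Qu: "Q u = 0" by (simp add: u_def bcl_diff[OF bQ] QQx)
    have Qv: "Q v = v" by (simp add: v_def bcl_diff[OF bQ] QQx Qs)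
    have o1: "cinner (A u) v = 0"
    proof -
      have "cinner (Q v) (A u) = cinner v (cadjoint Q (A u))" by (rule cadjoint_prop[OF bQ])
      also have "\<dots> = 0" by (simp add: adj[symmetric] Qu bcl_zero[OF bA])
      finally have "cinner v (A u) = 0" by (simp add: Qv)
      then show ?thesis by (subst cinner_commute) simp
    qed
    have o2: "cinner (A v) u = 0"
    proof -
      have "cinner (Q u) (A v) = cinner u (cadjoint Q (A v))" by (rule cadjoint_prop[OF bQ])
      then have "cinner u (A (Q v)) = 0" by (simp add: adj Qu)
      then show ?thesis by (subst cinner_commute) (simp add: Qv)
    qed
    have "cinner (A (u + v)) (u + v) = cinner (A u) u + cinner (A u) v + cinner (A v) u + cinner (A v) v"
      by (simp add: bcl_add[OF bA] cinner_add_left cinner_add_right)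
    then have "Re (cinner (A (y - s)) (y - s)) = Re (cinner (A u) u) + Re (cinner (A v) v)"
      by (simp add: ys o1 o2)
    then have "Re (cinner (A u) u) \<le> Re (cinner (A (y - s)) (y - s))" using Apos[of v] by simp
    then show ?thesis by (simp add: A_norm_def u_def)
  qed
  moreover have "range Q \<subseteq> S" using rQ by simp
  ultimately show ?thesis unfolding A_projection_def using bQ by blast
qed


lemma proj_imp_compat:
  fixes A :: "'a::{complex_inner, complete_space} \<Rightarrow> 'a" and S :: "'a set"
  assumes pA: "positive_op A" and cS: "closed_csubspace S" and aT: "A_projection A S T"
  shows "compatible A S"
proof -
  have bA: "bounded_clinear A" and Apos: "\<And>x. 0 \<le> Re (cinner (A x) x)"
    using pA by (auto simp: positive_op_def)
  have herm: "\<And>x y. cinner (A x) y = cinner x (A y)" by (rule pos_herm[OF pA])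
  have cs: "csubspace S" and clS: "closed S" using cS by (auto simp: closed_csubspace_def)
  have bT: "bounded_clinear T" and TS: "\<And>x. T x \<in> S"
    and mnT: "\<And>y s. s \<in> S \<Longrightarrow> A_norm A (y - T y) \<le> A_norm A (y - s)"
    using aT unfolding A_projection_def by auto
  have orth0: "cinner (A (y - T y)) s = 0" if sS: "s \<in> S" for y s
  proof (rule form_orth[where F = "\<lambda>a b. cinner (A a) b"])
    show "\<And>x y. cinner (A x) y = cnj (cinner (A y) x)" by (metis herm cinner_commute)
    show "\<And>x y z. cinner (A x) (y + z) = cinner (A x) y + cinner (A x) z" by (rule cinner_add_right)
    show "\<And>x c y. cinner (A x) (c *\<^sub>C y) = c * cinner (A x) y" by (rule cinner_scaleC_right)
    show "\<And>x. 0 \<le> Re (cinner (A x) x)" by (rule Apos)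
    fix c
    have "T y + c *\<^sub>C s \<in> S" by (intro csub_add csub_scaleC cs TS sS)
    then have "A_norm A (y - T y) \<le> A_norm A (y - (T y + c *\<^sub>C s))" by (rule mnT)
    also have "y - (T y + c *\<^sub>C s) = (y - T y) - c *\<^sub>C s" by simp
    finally show "Re (cinner (A (y - T y)) (y - T y)) \<le> Re (cinner (A (y - T y - c *\<^sub>C s)) (y - T y - c *\<^sub>C s))"
      by (simp add: A_norm_def)
  qed
  have orth1: "cinner (A s) (z - T z) = 0" if sS: "s \<in> S" for s z
    using orth0[OF sS, of z] herm[of s "z - T z"] cinner_commute[of s "A (z - T z)"] by simp
  define N where "N = {x \<in> S. \<forall>s\<in>S. cinner (A s) x = 0}"
  have csN: "csubspace N"
    unfolding N_def csubspace_def using cs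
    by (auto simp: csub_zero csub_add csub_scaleC cinner_add_right cinner_scaleC_right)
  have "N = S \<inter> (\<Inter>s\<in>S. {x. cinner (A s) x = 0})" unfolding N_def by auto
  moreover have "closed (S \<inter> (\<Inter>s\<in>S. {x. cinner (A s) x = 0}))"
    by (intro closed_Int clS closed_INT ballI closed_orth)
  ultimately have clN: "closed N" by simp
  have NS: "N \<subseteq> S" unfolding N_def by auto
  define P where "P = proj N"
  define Q where "Q x = T x + P (x - T x)" for x
  have PN: "P w \<in> N" for w unfolding P_def by (rule proj_in[OF csN clN])
  have PS: "P w \<in> S" for w using PN NS by auto
  have PA: "cinner (A s) (P w) = 0" if "s \<in> S" for s w using PN[of w] that unfolding N_def by auto
  have QS: "Q x \<in> S" for x unfolding Q_def by (intro csub_add cs TS PS)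
  have Qs: "Q s = s" if sS: "s \<in> S" for s
  proof -
    have "s - T s \<in> N" unfolding N_def using csub_diff[OF cs sS TS] orth1 by auto
    then have "P (s - T s) = s - T s" unfolding P_def by (rule proj_id[OF csN clN])
    then show ?thesis by (simp add: Q_def)
  qed
  have wperp: "cinner (A s) (z - Q z) = 0" if sS: "s \<in> S" for s z
  proof -
    have e: "z - Q z = (z - T z) - P (z - T z)" by (simp add: Q_def)
    have "cinner (A s) ((z - T z) - P (z - T z)) = cinner (A s) (z - T z) - cinner (A s) (P (z - T z))"
      by (rule cinner_diff_right)
    then show ?thesis unfolding e by (simp only: orth1[OF sS] PA[OF sS]) simp
  qed
  have bP: "bounded_clinear P" unfolding P_def by (rule proj_bounded[OF csN clN])
  obtain K where KT: "\<And>x. norm (T x) \<le> norm x * K" using bT unfolding bounded_clinear_def by blast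
  have bQ: "bounded_clinear Q"
    unfolding bounded_clinear_def clinear_def
  proof (intro conjI allI exI)
    show "Q (x + y) = Q x + Q y" for x y
    proof -
      have e: "x + y - T (x + y) = (x - T x) + (y - T y)" by (simp add: bcl_add[OF bT])
      show ?thesis by (simp only: Q_def e bcl_add[OF bP]) (simp add: bcl_add[OF bT] algebra_simps)
    qed
    show "Q (c *\<^sub>C x) = c *\<^sub>C Q x" for c x
    proof -
      have e: "c *\<^sub>C x - c *\<^sub>C T x = c *\<^sub>C (x - T x)" by (simp only: scaleC_diff_right)
      show ?thesis by (simp only: Q_def bcl_scaleC[OF bT] e bcl_scaleC[OF bP] scaleC_add_right)
    qed
    show "norm (Q x) \<le> norm x * (2 * K + 1)" for x
    proof -
      have "norm (P (x - T x)) \<le> norm (x - T x)" unfolding P_def by (rule proj_norm[OF csN clN])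
      also have "\<dots> \<le> norm x + norm (T x)" by (rule norm_triangle_ineq4)
      finally have "norm (Q x) \<le> norm (T x) + (norm x + norm (T x))"
        unfolding Q_def by (meson norm_triangle_ineq order_trans add_left_mono)
      then show ?thesis using KT[of x] by (simp add: algebra_simps)
    qed
  qed
  have QQ: "Q \<circ> Q = Q" by (rule ext) (simp add: Qs QS)
  have rQ: "range Q = S" using QS Qs by (auto intro: image_eqI[of _ Q, OF sym])
  have AQ: "A \<circ> Q = cadjoint Q \<circ> A"
  proof (rule ext)
    fix z
    have key: "cinner x (A (Q z)) = cinner x (cadjoint Q (A z))" for x
    proof -
      have "cinner x (cadjoint Q (A z)) = cinner (Q x) (A z)" by (rule cadjoint_prop[OF bQ, symmetric])
      also have "\<dots> = cinner (A (Q x)) z" by (rule herm[symmetric])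
      also have "\<dots> = cinner (A (Q x)) (Q z) + cinner (A (Q x)) (z - Q z)"
        by (simp add: cinner_add_right[symmetric])
      also have "cinner (A (Q x)) (z - Q z) = 0" by (rule wperp[OF QS])
      finally have r: "cinner x (cadjoint Q (A z)) = cinner (A (Q x)) (Q z)" by simp
      have "cinner x (A (Q z)) = cinner (A x) (Q z)" by (rule herm[symmetric])
      also have "A x = A (Q x) + A (x - Q x)" by (simp add: bcl_add[OF bA, symmetric])
      also have "cinner (A (Q x) + A (x - Q x)) (Q z) = cinner (A (Q x)) (Q z) + cinner (A (x - Q x)) (Q z)"
        by (rule cinner_add_left)
      also have "cinner (A (x - Q x)) (Q z) = 0"
      proof -
        have "cinner (A (Q z)) (x - Q x) = 0" by (rule wperp[OF QS])
        then have "cinner (Q z) (A (x - Q x)) = 0" by (simp add: herm)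
        then show ?thesis by (subst cinner_commute) (simp add: herm)
      qed
      finally show ?thesis using r by simp
    qed
    define D where "D = A (Q z) - cadjoint Q (A z)"
    have "cinner D D = 0" using key[of D] by (simp add: D_def cinner_diff_right)
    then have "D = 0" by (simp add: cinner_eq_zero_iff)
    then show "(A \<circ> Q) z = (cadjoint Q \<circ> A) z" by (simp add: D_def)
  qed
  show ?thesis unfolding compatible_def using bQ QQ rQ AQ by blast
qed

theorem mainTheorem6:
  fixes A :: "'a::{complex_inner, complete_space} \<Rightarrow> 'a" and S :: "'a set"
  assumes "separable_space (euclidean :: 'a topology)"
    and "positive_op A"
    and "closed_csubspace S"
  shows "compatible A S \<longleftrightarrow> (\<exists>T. A_projection A S T)"
  using compat_imp_proj[OF assms(2)] proj_imp_compat[OF assms(2) assms(3)] by blast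

end
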